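(* Let $p$ be an odd prime, $S$ a symmetric multiset of elements of $\mathbb Z_p^n$, $G=\mathrm{Cay}(\mathbb Z_p^n,S)$, $S'=\biguplus_{k=1}^{(p-1)/2}kS$ (multiset union, $kS=\{ks:s\in S\}$), and $G'=\mathrm{Cay}(\mathbb Z_p^n,S')$. Then $$\phi(G)\le\phi(G')\le\frac{p+1}{4}\,\phi(G).$$
   Context: A multiset $S$ is symmetric if $x$ and $-x$ have equal multiplicity for all $x$. $\mathrm{Cay}(\Gamma,S)$ has vertex set $\Gamma$ and an edge $(v,v+s)$ for every $v$ and every element $s$ of $S$ (with multiplicity). For $Q\subseteq\Gamma$, $\partial Q$ is the multiset of edges $(i,j)$ with $i\in Q$, $j\notin Q$; $\phi_G(Q)=|\partial Q|/(|S||Q|)$ and $\phi(G)=\min\{\phi_G(Q):1\le|Q|\le|\Gamma|/2\}$. *)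

theory Defs
  imports Complex_Main "HOL-Library.Multiset" "HOL-Computational_Algebra.Primes"
begin

definition zpn :: "nat \<Rightarrow> nat \<Rightarrow> nat list set" where
  "zpn p n = {v. length v = n \<and> (\<forall>i<n. v ! i < p)}"

definition zadd :: "nat \<Rightarrow> nat list \<Rightarrow> nat list \<Rightarrow> nat list" where
  "zadd p u v = map2 (\<lambda>a b. (a + b) mod p) u v"

definition zneg :: "nat \<Rightarrow> nat list \<Rightarrow> nat list" where
  "zneg p v = map (\<lambda>a. (p - a) mod p) v"

definition zsmul :: "nat \<Rightarrow> nat \<Rightarrow> nat list \<Rightarrow> nat list" where
  "zsmul p k v = map (\<lambda>a. (k * a) mod p) v"

definition symmetric_ms :: "nat \<Rightarrow> nat \<Rightarrow> nat list multiset \<Rightarrow> bool" where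
  "symmetric_ms p n S \<longleftrightarrow> (\<forall>x\<in>zpn p n. count S x = count S (zneg p x))"

text \<open>Cayley (multi)graph Cay(Gamma,S) with edges (v, v+s) for every v and every
  element s of S with multiplicity.\<close>

definition cay_boundary :: "('a \<Rightarrow> 'a \<Rightarrow> 'a) \<Rightarrow> 'a multiset \<Rightarrow> 'a set \<Rightarrow> nat" where
  "cay_boundary add S Q = (\<Sum>v\<in>Q. size (filter_mset (\<lambda>s. add v s \<notin> Q) S))"

definition cay_expansion :: "('a \<Rightarrow> 'a \<Rightarrow> 'a) \<Rightarrow> 'a multiset \<Rightarrow> 'a set \<Rightarrow> real" where
  "cay_expansion add S Q = real (cay_boundary add S Q) / (real (size S) * real (card Q))"

definition cay_phi :: "'a set \<Rightarrow> ('a \<Rightarrow> 'a \<Rightarrow> 'a) \<Rightarrow> 'a multiset \<Rightarrow> real" where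
  "cay_phi Gamma add S = Min {cay_expansion add S Q | Q. Q \<subseteq> Gamma \<and> 1 \<le> card Q
       \<and> real (card Q) \<le> real (card Gamma) / 2}"

end

theory Submission
  imports Defs "HOL-Number_Theory.Cong"
begin

lemma zpn_finite: "finite (zpn p n)"
proof -
  have "zpn p n \<subseteq> {xs. set xs \<subseteq> {..<p} \<and> length xs = n}"
    by (auto simp: zpn_def in_set_conv_nth)
  thus ?thesis by (rule finite_subset) (simp add: finite_lists_length_eq)
qed

lemma zadd_in: "u \<in> zpn p n \<Longrightarrow> v \<in> zpn p n \<Longrightarrow> p > 0 \<Longrightarrow> zadd p u v \<in> zpn p n"
  by (simp add: zpn_def zadd_def)

lemma zsmul_in: "length v = n \<Longrightarrow> p > 0 \<Longrightarrow> zsmul p k v \<in> zpn p n"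
  by (simp add: zpn_def zsmul_def)

lemma zadd_assoc: "length u = length v \<Longrightarrow> length v = length w \<Longrightarrow>
   zadd p (zadd p u v) w = zadd p u (zadd p v w)"
  by (rule nth_equalityI) (simp_all add: zadd_def mod_add_left_eq mod_add_right_eq add.assoc)

lemma zadd_cancel:
  assumes "u \<in> zpn p n" "w \<in> zpn p n" "length v = n" "zadd p u v = zadd p w v"
  shows "u = w"
proof (rule nth_equalityI)
  show "length u = length w" using assms by (simp add: zpn_def)
  fix i assume i: "i < length u"
  have "(u!i + v!i) mod p = (w!i + v!i) mod p"
  proof -
    have "zadd p u v ! i = zadd p w v ! i" using assms(4) by simp
    moreover have "length u = n" "length w = n" using assms(1,2) by (auto simp: zpn_def)
    ultimately show ?thesis using i assms(3) by (simp add: zadd_def)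
  qed
  hence "[u!i = w!i] (mod p)" using cong_add_rcancel_nat unfolding cong_def by blast
  moreover have "u!i < p" "w!i < p" using assms i by (auto simp: zpn_def)
  ultimately show "u!i = w!i" by (metis cong_def mod_less)
qed

lemma zadd_zero: "v \<in> zpn p n \<Longrightarrow> zadd p v (replicate n 0) = v"
  by (rule nth_equalityI) (auto simp: zadd_def zpn_def)

lemma zsmul_0: "zsmul p 0 s = replicate (length s) 0"
  by (rule nth_equalityI) (auto simp: zsmul_def)

lemma zsmul_Suc: "zsmul p (Suc k) s = zadd p (zsmul p k s) s"
  by (rule nth_equalityI) (simp_all add: zsmul_def zadd_def mod_add_right_eq add.commute)

lemma zsmul_zadd: "length u = length v \<Longrightarrow>
   zsmul p k (zadd p u v) = zadd p (zsmul p k u) (zsmul p k v)"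
  by (rule nth_equalityI) (simp_all add: zsmul_def zadd_def mod_add_eq mod_mult_right_eq distrib_left)

lemma zsmul_inv:
  assumes "[k * k' = 1] (mod p)" "v \<in> zpn p n"
  shows "zsmul p k' (zsmul p k v) = v"
proof (rule nth_equalityI)
  show "length (zsmul p k' (zsmul p k v)) = length v" by (simp add: zsmul_def)
  fix i assume i: "i < length (zsmul p k' (zsmul p k v))"
  have lt: "v!i < p" using assms i by (auto simp: zpn_def zsmul_def)
  have "(k' * (k * v!i mod p)) mod p = ((k * k') * v!i) mod p"
    by (simp add: mod_mult_right_eq mult.assoc mult.left_commute)
  also have "\<dots> = ((k*k') mod p * v!i) mod p" by (simp add: mod_mult_left_eq)
  also have "\<dots> = v!i" using assms(1) lt unfolding cong_def
    by (cases "p = 1") auto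
  finally show "zsmul p k' (zsmul p k v) ! i = v ! i" using i by (simp add: zsmul_def)
qed

definition ebd :: "('a \<Rightarrow> 'a \<Rightarrow> 'a) \<Rightarrow> 'a \<Rightarrow> 'a set \<Rightarrow> nat" where
  "ebd add a Q = card {v\<in>Q. add v a \<notin> Q}"

lemma bnd_sum: "finite Q \<Longrightarrow> cay_boundary add S Q = (\<Sum>s\<in>#S. ebd add s Q)"
proof (induction S)
  case empty
  then show ?case by (simp add: cay_boundary_def)
next
  case (add s S)
  have "cay_boundary add (add_mset s S) Q
      = (\<Sum>v\<in>Q. (if add v s \<notin> Q then 1 else 0) + size (filter_mset (\<lambda>t. add v t \<notin> Q) S))"
    unfolding cay_boundary_def by (rule sum.cong) auto
  also have "\<dots> = (\<Sum>v\<in>Q. (if add v s \<notin> Q then 1 else 0)) + cay_boundary add S Q"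
    by (simp add: sum.distrib cay_boundary_def)
  also have "(\<Sum>v\<in>Q. (if add v s \<notin> Q then 1 else 0)) = ebd add s Q"
    using add.prems by (simp add: ebd_def sum.If_cases Int_def)
  finally show ?case using add by simp
qed

lemma ebd_sub:
  assumes Q: "Q \<subseteq> zpn p n" and a: "length a = n" and b: "length b = n"
  shows "ebd (zadd p) (zadd p a b) Q \<le> ebd (zadd p) a Q + ebd (zadd p) b Q"
proof -
  have fin: "finite Q" using Q zpn_finite finite_subset by blast
  let ?X = "{v\<in>Q. zadd p v a \<notin> Q}"
  let ?Y = "{v\<in>Q. zadd p v a \<in> Q \<and> zadd p (zadd p v a) b \<notin> Q}"
  let ?Z = "{w\<in>Q. zadd p w b \<notin> Q}"
  have sub: "{v\<in>Q. zadd p v (zadd p a b) \<notin> Q} \<subseteq> ?X \<union> ?Y"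
  proof
    fix v assume v: "v \<in> {v\<in>Q. zadd p v (zadd p a b) \<notin> Q}"
    hence "length v = n" using Q by (auto simp: zpn_def)
    hence "zadd p v (zadd p a b) = zadd p (zadd p v a) b" using a b by (simp add: zadd_assoc)
    thus "v \<in> ?X \<union> ?Y" using v by auto
  qed
  have "card ?Y \<le> card ?Z"
  proof (rule card_inj_on_le)
    show "inj_on (\<lambda>v. zadd p v a) ?Y"
      by (rule inj_onI) (use Q a in \<open>auto intro: zadd_cancel\<close>)
    show "(\<lambda>v. zadd p v a) ` ?Y \<subseteq> ?Z" by auto
    show "finite ?Z" using fin by simp
  qed
  have "ebd (zadd p) (zadd p a b) Q \<le> card (?X \<union> ?Y)"
    unfolding ebd_def by (rule card_mono) (use fin sub in auto)
  also have "\<dots> \<le> card ?X + card ?Y" by (rule card_Un_le)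
  finally show ?thesis using \<open>card ?Y \<le> card ?Z\<close> by (simp add: ebd_def)
qed

lemma ebd_smul:
  assumes Q: "Q \<subseteq> zpn p n" and s: "length s = n"
  shows "ebd (zadd p) (zsmul p k s) Q \<le> k * ebd (zadd p) s Q"
proof (induction k)
  case 0
  have "{v\<in>Q. zadd p v (replicate n 0) \<notin> Q} = {}" using Q zadd_zero by fastforce
  moreover have "zsmul p 0 s = replicate n 0" using s zsmul_0 by simp
  ultimately show ?case by (simp only: ebd_def) simp
next
  case (Suc k)
  have "ebd (zadd p) (zsmul p (Suc k) s) Q \<le> ebd (zadd p) (zsmul p k s) Q + ebd (zadd p) s Q"
    unfolding zsmul_Suc by (rule ebd_sub[OF Q]) (simp_all add: zsmul_def s)
  then show ?case using Suc by simp
qed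

lemma inj_zsmul:
  assumes kk: "[k' * k = 1] (mod p)"
  shows "inj_on (zsmul p k) (zpn p n)"
proof (rule inj_onI)
  fix x y assume x: "x \<in> zpn p n" and y: "y \<in> zpn p n" and e: "zsmul p k x = zsmul p k y"
  have kk2: "[k * k' = 1] (mod p)" using kk by (simp add: mult.commute)
  have "x = zsmul p k' (zsmul p k x)" using zsmul_inv[OF kk2 x] by simp
  also have "\<dots> = zsmul p k' (zsmul p k y)" using e by simp
  also have "\<dots> = y" using zsmul_inv[OF kk2 y] .
  finally show "x = y" .
qed

lemma ebd_inv:
  assumes p: "p > 0" and kk: "[k * k' = 1] (mod p)" and Q: "Q \<subseteq> zpn p n" and s: "s \<in> zpn p n"
  shows "ebd (zadd p) (zsmul p k s) Q = ebd (zadd p) s (zsmul p k' ` Q)"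
proof -
  let ?f = "zsmul p k'"
  have kk': "[k' * k = 1] (mod p)" using kk by (simp add: mult.commute)
  have inj: "inj_on ?f (zpn p n)" by (rule inj_zsmul[OF kk])
  have injQ: "inj_on ?f Q" using inj Q inj_on_subset by blast
  have sn: "length s = n" using s by (simp add: zpn_def)
  have key: "zadd p (?f v) s \<notin> ?f ` Q \<longleftrightarrow> zadd p v (zsmul p k s) \<notin> Q" if v: "v \<in> Q" for v
  proof -
    have vn: "v \<in> zpn p n" using v Q by auto
    have ks: "zsmul p k s \<in> zpn p n" using sn p by (simp add: zsmul_in)
    have w: "zadd p v (zsmul p k s) \<in> zpn p n" using zadd_in[OF vn ks p] .
    have "?f (zadd p v (zsmul p k s)) = zadd p (?f v) (?f (zsmul p k s))"
      by (rule zsmul_zadd) (use vn sn in \<open>simp add: zpn_def zsmul_def\<close>)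
    also have "?f (zsmul p k s) = s" using zsmul_inv[OF kk s] .
    finally have e: "?f (zadd p v (zsmul p k s)) = zadd p (?f v) s" .
    have "?f (zadd p v (zsmul p k s)) \<in> ?f ` Q \<longleftrightarrow> zadd p v (zsmul p k s) \<in> Q"
      using inj_on_image_mem_iff[OF inj w Q] .
    thus ?thesis using e by simp
  qed
  have "{w\<in>?f ` Q. zadd p w s \<notin> ?f ` Q} = ?f ` {v\<in>Q. zadd p (?f v) s \<notin> ?f ` Q}" by auto
  also have "{v\<in>Q. zadd p (?f v) s \<notin> ?f ` Q} = {v\<in>Q. zadd p v (zsmul p k s) \<notin> Q}"
    using key by auto
  finally have "{w\<in>?f ` Q. zadd p w s \<notin> ?f ` Q} = ?f ` {v\<in>Q. zadd p v (zsmul p k s) \<notin> Q}" .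
  moreover have "inj_on ?f {v\<in>Q. zadd p v (zsmul p k s) \<notin> Q}" using injQ inj_on_subset by fastforce
  ultimately show ?thesis unfolding ebd_def by (simp add: card_image)
qed

lemma sum_mset_setsum: "finite K \<Longrightarrow> (\<Sum>x\<in>#(\<Sum>k\<in>K. M k). f x) = (\<Sum>k\<in>K. \<Sum>x\<in>#M k. f x)"
  by (induction K rule: finite_induct) auto

lemma size_setsum: "finite K \<Longrightarrow> size (\<Sum>k\<in>K. (M k :: 'a multiset)) = (\<Sum>k\<in>K. size (M k))"
  by (induction K rule: finite_induct) auto

lemma gauss2: "2 * (\<Sum>k\<in>{1..m}. k) = m * (m + 1::nat)"
  by (induction m) auto

lemma inverse_exists:
  fixes p k :: nat
  assumes "prime p" "0 < k" "k < p"
  shows "\<exists>k'. [k * k' = 1] (mod p)"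
proof -
  have "\<not> p dvd k"
  proof
    assume "p dvd k" hence "p \<le> k" using assms(2) by (rule dvd_imp_le)
    thus False using assms(3) by simp
  qed
  hence "coprime p k" using assms(1) prime_imp_coprime by blast
  hence "coprime k p" by (simp add: coprime_commute)
  thus ?thesis using cong_solve_coprime_nat by simp
qed

theorem lemmaC2:
  fixes p n :: nat and S :: "nat list multiset"
  assumes "prime p" and "odd p" and "n \<ge> 1"
    and "set_mset S \<subseteq> zpn p n"
    and "symmetric_ms p n S"
  defines "S' \<equiv> (\<Sum>k\<in>{1..(p - 1) div 2}. image_mset (zsmul p k) S)"
  shows "cay_phi (zpn p n) (zadd p) S \<le> cay_phi (zpn p n) (zadd p) S'
       \<and> cay_phi (zpn p n) (zadd p) S' \<le> (real p + 1) / 4 * cay_phi (zpn p n) (zadd p) S"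
proof -
  define G where "G = zpn p n"
  define m where "m = (p - 1) div 2"
  define adm where "adm Q \<longleftrightarrow> Q \<subseteq> G \<and> 1 \<le> card Q \<and> real (card Q) \<le> real (card G) / 2" for Q
  define A where "A T = {cay_expansion (zadd p) T Q | Q. adm Q}" for T
  have p2: "p \<ge> 2" using assms(1) prime_ge_2_nat by blast
  have p3: "p \<ge> 3" using p2 assms(2) by (cases "p = 2") auto
  have m1: "m \<ge> 1" using p3 unfolding m_def by linarith
  have pm: "p = 2 * m + 1" using assms(2) unfolding m_def by (auto elim!: oddE)
  have pr: "(real p + 1) / 4 = (real m + 1) / 2" using pm by simp
  have finG: "finite G" unfolding G_def by (rule zpn_finite)
  have z0: "replicate n 0 \<in> G" and z1: "replicate n 1 \<in> G"
    using p3 by (auto simp: G_def zpn_def)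
  have "replicate n (0::nat) \<noteq> replicate n 1" using assms(3) by (cases n) auto
  hence "card {replicate n (0::nat), replicate n 1} = 2" by simp
  moreover have "card {replicate n (0::nat), replicate n 1} \<le> card G"
    by (rule card_mono[OF finG]) (use z0 z1 in auto)
  ultimately have cG: "card G \<ge> 2" by linarith
  have adm0: "adm {replicate n 0}" using z0 cG unfolding adm_def by auto
  have finA: "finite (A T)" for T
  proof -
    have "A T = cay_expansion (zadd p) T ` {Q. adm Q}" unfolding A_def by auto
    moreover have "{Q. adm Q} \<subseteq> Pow G" unfolding adm_def by auto
    moreover have "finite {Q. adm Q}" using finite_subset[OF _ finite_Pow_iff[THEN iffD2, OF finG]]
      \<open>{Q. adm Q} \<subseteq> Pow G\<close> by blast
    ultimately show ?thesis by simp
  qed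
  have neA: "A T \<noteq> {}" for T using adm0 unfolding A_def by auto
  have phi: "cay_phi (zpn p n) (zadd p) T = Min (A T)" for T
    unfolding cay_phi_def A_def adm_def G_def by simp
  have phi_le: "Min (A T) \<le> cay_expansion (zadd p) T Q" if "adm Q" for T Q
    using that finA unfolding A_def by (auto intro!: Min_le)
  have phi_in: "\<exists>Q. adm Q \<and> Min (A T) = cay_expansion (zadd p) T Q" for T
    using Min_in[OF finA neA] unfolding A_def by auto
  have SG: "s \<in> G \<Longrightarrow> length s = n" for s unfolding G_def zpn_def by auto
  have SinG: "s \<in># S \<Longrightarrow> s \<in> G" for s using assms(4) unfolding G_def by auto
  have finQ: "adm Q \<Longrightarrow> finite Q" for Q unfolding adm_def using finG finite_subset by blast
  have sizeS': "size S' = m * size S"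
    unfolding S'_def m_def[symmetric] by (simp add: size_setsum)
  have bS': "cay_boundary (zadd p) S' Q = (\<Sum>k\<in>{1..m}. \<Sum>s\<in>#S. ebd (zadd p) (zsmul p k s) Q)"
    if "finite Q" for Q
    using that unfolding S'_def m_def[symmetric]
    by (simp add: bnd_sum sum_mset_setsum image_mset.compositionality o_def)
  have nn: "0 \<le> cay_expansion (zadd p) T Q" for T Q unfolding cay_expansion_def by simp
  have U: "cay_expansion (zadd p) S' Q \<le> (real p + 1) / 4 * cay_expansion (zadd p) S Q"
    if aQ: "adm Q" for Q
  proof -
    have fQ: "finite Q" using finQ aQ .
    have QG: "Q \<subseteq> zpn p n" using aQ unfolding adm_def G_def by auto
    define B where "B = cay_boundary (zadd p) S Q"
    define B' where "B' = cay_boundary (zadd p) S' Q"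
    have "B' \<le> (\<Sum>k\<in>{1..m}. \<Sum>s\<in>#S. k * ebd (zadd p) s Q)"
      unfolding B'_def bS'[OF fQ]
    proof (rule sum_mono)
      fix k assume "k \<in> {1..m}"
      show "(\<Sum>s\<in>#S. ebd (zadd p) (zsmul p k s) Q) \<le> (\<Sum>s\<in>#S. k * ebd (zadd p) s Q)"
        by (rule sum_mset_mono) (rule ebd_smul[OF QG SG[OF SinG]])
    qed
    also have "\<dots> = (\<Sum>k\<in>{1..m}. k * B)"
    proof (rule sum.cong)
      fix k show "(\<Sum>s\<in>#S. k * ebd (zadd p) s Q) = k * B"
        unfolding B_def bnd_sum[OF fQ] by (rule sum_mset_distrib_left[symmetric])
    qed simp
    also have "\<dots> = (\<Sum>k\<in>{1..m}. k) * B" by (rule sum_distrib_right[symmetric])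
    finally have "2 * B' \<le> 2 * (\<Sum>k\<in>{1..m}. k) * B" by simp
    hence "2 * B' \<le> m * (m + 1) * B" unfolding gauss2 .
    hence "real (2 * B') \<le> real (m * (m + 1) * B)" by (rule of_nat_mono)
    hence le: "2 * real B' \<le> real m * (real m + 1) * real B"
      by (simp only: of_nat_mult of_nat_add of_nat_1 of_nat_numeral)
    show ?thesis
    proof (cases "size S = 0")
      case True thus ?thesis unfolding cay_expansion_def sizeS' by simp
    next
      case False
    hence "size S > 0" by linarith
      have c: "card Q \<ge> 1" using aQ unfolding adm_def by auto
      define d where "d = real (size S) * real (card Q)"
      have d: "d > 0" using False c unfolding d_def by (simp add: zero_less_mult_iff nonempty_has_size)
      have "cay_expansion (zadd p) S' Q = real B' / (real m * d)"
        unfolding cay_expansion_def B'_def sizeS' d_def by (simp add: mult.assoc)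
      also have "\<dots> \<le> (real m * (real m + 1) * real B / 2) / (real m * d)"
        using le d m1 by (intro divide_right_mono) auto
      also have "\<dots> = (real m + 1) / 2 * (real B / d)" using d m1 by (simp add: field_simps)
      also have "\<dots> = (real p + 1) / 4 * cay_expansion (zadd p) S Q"
        unfolding pr cay_expansion_def B_def d_def ..
      finally show ?thesis .
    qed
  qed
  have L: "Min (A S) \<le> cay_expansion (zadd p) S' Q" if aQ: "adm Q" for Q
  proof (cases "size S = 0")
    case True
    have "Min (A S) \<le> cay_expansion (zadd p) S Q" using phi_le[OF aQ] .
    also have "\<dots> = 0" using True unfolding cay_expansion_def by simp
    finally show ?thesis using nn[of S' Q] by linarith
  next
    case False
    hence "size S > 0" by linarith
    have fQ: "finite Q" using finQ aQ .
    have QG: "Q \<subseteq> zpn p n" using aQ unfolding adm_def G_def by auto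
    have c: "card Q \<ge> 1" using aQ unfolding adm_def by auto
    define d where "d = real (size S) * real (card Q)"
    have d: "d > 0" using False c unfolding d_def by (simp add: zero_less_mult_iff nonempty_has_size)
    define \<phi> where "\<phi> = Min (A S)"
    have each: "\<phi> * d \<le> real (\<Sum>s\<in>#S. ebd (zadd p) (zsmul p k s) Q)" if k: "k \<in> {1..m}" for k
    proof -
      have "0 < k" "k < p" using k pm by auto
      then obtain k' where kk: "[k * k' = 1] (mod p)" using inverse_exists[OF assms(1)] by blast
      define Q' where "Q' = zsmul p k' ` Q"
      have kk': "[k' * k = 1] (mod p)" using kk by (simp add: mult.commute)
      have inj: "inj_on (zsmul p k') (zpn p n)" using inj_zsmul[OF kk] .
      have cQ': "card Q' = card Q" unfolding Q'_def using inj QG by (metis card_image inj_on_subset)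
      have Q'G: "Q' \<subseteq> G"
      proof
        fix w assume "w \<in> Q'"
        then obtain v where v: "v \<in> Q" "w = zsmul p k' v" unfolding Q'_def by auto
        have "length v = n" using v QG by (auto simp: zpn_def)
        thus "w \<in> G" unfolding G_def v(2) using p2 by (intro zsmul_in) auto
      qed
      have aQ': "adm Q'" using aQ[unfolded adm_def] cQ' Q'G unfolding adm_def by simp
      have eq: "(\<Sum>s\<in>#S. ebd (zadd p) (zsmul p k s) Q) = cay_boundary (zadd p) S Q'"
      proof -
        have e1: "ebd (zadd p) (zsmul p k s) Q = ebd (zadd p) s Q'" if "s \<in># S" for s
        proof -
          have "s \<in> zpn p n" using SinG[OF that] unfolding G_def .
          moreover have "p > 0" using p2 by simp
          ultimately show ?thesis unfolding Q'_def using ebd_inv[OF _ kk QG] by blast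
        qed
        have "(\<Sum>s\<in>#S. ebd (zadd p) (zsmul p k s) Q) = (\<Sum>s\<in>#S. ebd (zadd p) s Q')"
          by (rule arg_cong[where f=sum_mset], rule image_mset_cong, rule e1)
        also have "\<dots> = cay_boundary (zadd p) S Q'"
          using bnd_sum[OF finite_subset[OF Q'G finG], symmetric] .
        finally show ?thesis .
      qed
      have "\<phi> \<le> cay_expansion (zadd p) S Q'" unfolding \<phi>_def by (rule phi_le[OF aQ'])
      also have "\<dots> = real (cay_boundary (zadd p) S Q') / d"
        unfolding cay_expansion_def d_def cQ' ..
      finally show ?thesis using d eq by (simp add: pos_le_divide_eq)
    qed
    have "real m * (\<phi> * d) = (\<Sum>k\<in>{1..m}. \<phi> * d)" by simp
    also have "\<dots> \<le> (\<Sum>k\<in>{1..m}. real (\<Sum>s\<in>#S. ebd (zadd p) (zsmul p k s) Q))"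
      by (rule sum_mono) (rule each)
    also have "\<dots> = real (cay_boundary (zadd p) S' Q)" using bS'[OF fQ] by simp
    finally have "real m * (\<phi> * d) \<le> real (cay_boundary (zadd p) S' Q)" .
    moreover have "cay_expansion (zadd p) S' Q = real (cay_boundary (zadd p) S' Q) / (real m * d)"
      unfolding cay_expansion_def sizeS' d_def by (simp add: mult.assoc)
    ultimately show ?thesis using d m1 unfolding \<phi>_def[symmetric]
      by (simp add: pos_le_divide_eq mult.commute mult.left_commute)
  qed
  obtain Q0 where Q0: "adm Q0" "Min (A S') = cay_expansion (zadd p) S' Q0" using phi_in by blast
  obtain Q1 where Q1: "adm Q1" "Min (A S) = cay_expansion (zadd p) S Q1" using phi_in by blast
  have 1: "Min (A S) \<le> Min (A S')" using L[OF Q0(1)] Q0(2) by simp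
  have "Min (A S') \<le> cay_expansion (zadd p) S' Q1" by (rule phi_le[OF Q1(1)])
  also have "\<dots> \<le> (real p + 1) / 4 * Min (A S)" using U[OF Q1(1)] Q1(2) by simp
  finally show ?thesis using 1 unfolding phi by simp
qed

end
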